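(* Let $f$ be a smooth function on $\mathbb R^d_+=(0,\infty)^d$. The following are equivalent: (i) $f\in g^1_1(\mathbb R^d_+)$; (ii) for every $h>0$ there exists $C=C_h>0$ such that $\|x^k\partial^p f(x)\|_{L^2(\mathbb R^d_+)}\le C h^{|p+k|}|k|!$ for all $k,p\in\mathbb N_0^d$; (iii) for every $h>0$ there exists $C=C_h>0$ such that $\sup_{x\in\mathbb R^d_+}|x^k\partial^p f(x)|\le C h^{|p+k|}|k|!$ for all $k,p\in\mathbb N_0^d$.
   Context: Multi-index notation: for $k,p\in\mathbb N_0^d$, $x\in\mathbb R^d_+$, $|k|=k_1+\dots+k_d$, $x^{k}=\prod_j x_j^{k_j}$, $x^{(p+k)/2}=\prod_j x_j^{(p_j+k_j)/2}$, $k^{(\alpha/2)k}=\prod_j k_j^{(\alpha/2)k_j}$ with $0^0=1$, $\partial^p=\partial_{x_1}^{p_1}\cdots\partial_{x_d}^{p_d}$. $\mathcal S(\mathbb R^d_+)$ is the space of $f\in C^\infty(\mathbb R^d_+)$ all of whose derivatives extend continuously to $\overline{\mathbb R^d_+}=[0,\infty)^d$ and satisfy $\sup_{x\in\mathbb R^d_+}x^\beta|\partial^\gamma f(x)|<\infty$ for all $\beta,\gamma\in\mathbb N_0^d$. For $\alpha>0$, $A>0$, $g^{\alpha,A}_{\alpha,A}(\mathbb R^d_+)$ is the space of all $f\in\mathcal S(\mathbb R^d_+)$ with $\sup_{p,k\in\mathbb N_0^d}\frac{\|x^{(p+k)/2}\partial^p f(x)\|_{L^2(\mathbb R^d_+)}}{A^{|p+k|}k^{(\alpha/2)k}p^{(\alpha/2)p}}<\infty$,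 and $g^\alpha_\alpha(\mathbb R^d_+)=\bigcap_{A>0}g^{\alpha,A}_{\alpha,A}(\mathbb R^d_+)$. In particular $g^1_1(\mathbb R^d_+)=\bigcap_{A>0}g^{1,A}_{1,A}(\mathbb R^d_+)$. *)

theory Defs
  imports "HOL-Analysis.Analysis"
begin

text \<open>Points of R^d are vectors of type real^'d ('d a finite index type, d = CARD('d)).
  Multi-indices are functions 'd \<Rightarrow> nat.\<close>

definition orth :: "(real^'d) set" where
  "orth = {x. \<forall>i. 0 < x $ i}"

definition orth_closed :: "(real^'d) set" where
  "orth_closed = {x. \<forall>i. 0 \<le> x $ i}"

definition partial :: "'d \<Rightarrow> (real^'d \<Rightarrow> real) \<Rightarrow> real^'d \<Rightarrow> real" where
  "partial i g x = deriv (\<lambda>t. g (x + t *\<^sub>R axis i 1)) 0"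

text \<open>Iterated partial derivative along a list of directions (last element applied first).\<close>
fun dpl :: "'d list \<Rightarrow> (real^'d \<Rightarrow> real) \<Rightarrow> real^'d \<Rightarrow> real" where
  "dpl [] g = g"
| "dpl (i # is) g = partial i (dpl is g)"

definition smooth_on :: "(real^'d) set \<Rightarrow> (real^'d \<Rightarrow> real) \<Rightarrow> bool" where
  "smooth_on U g \<longleftrightarrow>
     (\<forall>is. continuous_on U (dpl is g) \<and>
        (\<forall>i. \<forall>x\<in>U. (\<lambda>t. dpl is g (x + t *\<^sub>R axis i 1)) differentiable (at 0)))"

definition idx_list :: "'d::finite list" where
  "idx_list = (SOME xs. distinct xs \<and> set xs = UNIV)"

text \<open>\<partial>^p = \<partial>_1^{p_1} ... \<partial>_d^{p_d} (order irrelevant for smooth functions).\<close>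
definition Dp :: "('d::finite \<Rightarrow> nat) \<Rightarrow> (real^'d \<Rightarrow> real) \<Rightarrow> real^'d \<Rightarrow> real" where
  "Dp p g = dpl (concat (map (\<lambda>i. replicate (p i) i) idx_list)) g"

definition mabs :: "('d::finite \<Rightarrow> nat) \<Rightarrow> nat" where
  "mabs p = (\<Sum>j\<in>UNIV. p j)"

definition xpow :: "real^'d::finite \<Rightarrow> ('d \<Rightarrow> nat) \<Rightarrow> real" where
  "xpow x k = (\<Prod>j\<in>UNIV. (x $ j) ^ k j)"

definition xpow_half :: "real^'d::finite \<Rightarrow> ('d \<Rightarrow> nat) \<Rightarrow> ('d \<Rightarrow> nat) \<Rightarrow> real" where
  "xpow_half x p k = (\<Prod>j\<in>UNIV. (x $ j) powr ((real (p j) + real (k j)) / 2))"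

text \<open>k^{(\<alpha>/2)k} = \<Prod>_j (k_j^{k_j})^{\<alpha>/2}, with 0^0 = 1.\<close>
definition kpow :: "real \<Rightarrow> ('d::finite \<Rightarrow> nat) \<Rightarrow> real" where
  "kpow \<alpha> k = (\<Prod>j\<in>UNIV. (real (k j) ^ k j) powr (\<alpha> / 2))"

definition L2norm :: "(real^'d \<Rightarrow> real) \<Rightarrow> ennreal" where
  "L2norm F = (let I = (\<integral>\<^sup>+ x \<in> orth. ennreal ((F x)\<^sup>2) \<partial>lborel) in
     if I = \<infinity> then \<infinity> else ennreal (sqrt (enn2real I)))"

definition schwartz_half :: "(real^'d::finite \<Rightarrow> real) \<Rightarrow> bool" where
  "schwartz_half f \<longleftrightarrow> smooth_on orth f \<and>
     (\<forall>\<gamma>. \<exists>g. continuous_on orth_closed g \<and> (\<forall>x\<in>orth. g x = Dp \<gamma> f x)) \<and>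
     (\<forall>\<beta> \<gamma>. bounded ((\<lambda>x. xpow x \<beta> * Dp \<gamma> f x) ` orth))"

text \<open>g^{\<alpha>,A}_{\<alpha>,A}(R^d_+): the supremum is finite iff it is bounded by some B.\<close>
definition gaA :: "real \<Rightarrow> real \<Rightarrow> (real^'d::finite \<Rightarrow> real) set" where
  "gaA \<alpha> A = {f. schwartz_half f \<and>
     (\<exists>B::real. \<forall>p k. L2norm (\<lambda>x. xpow_half x p k * Dp p f x)
        \<le> ennreal (B * A ^ (mabs p + mabs k) * kpow \<alpha> k * kpow \<alpha> p))}"

definition g_alpha :: "real \<Rightarrow> (real^'d::finite \<Rightarrow> real) set" where
  "g_alpha \<alpha> = (\<Inter>A\<in>{A. A > 0}. gaA \<alpha> A)"

end

theory Submission
  imports Defs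
begin


lemma taylor_zero:
  fixes D :: "nat \<Rightarrow> real \<Rightarrow> real"
  assumes deriv: "\<And>n t. 0 \<le> t \<Longrightarrow> (D n has_real_derivative D (Suc n) t) (at t)"
  and small: "\<And>\<epsilon>. \<epsilon> > 0 \<Longrightarrow> \<exists>T>0. (\<forall>N. (\<Sum>n<N. \<bar>D n T\<bar> * T^n / fact n) \<le> \<epsilon>)
        \<and> (\<exists>N>0. \<forall>t\<in>{0..T}. \<bar>D N t\<bar> * T^N / fact N \<le> \<epsilon>)"
  shows "D 0 0 = 0"
proof -
  have key: "\<bar>D 0 0\<bar> \<le> 2 * \<epsilon>" if eps: "\<epsilon> > 0" for \<epsilon>
  proof -
    obtain T N where T: "T > 0" and sb: "\<And>N. (\<Sum>n<N. \<bar>D n T\<bar> * T^n / fact n) \<le> \<epsilon>"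
      and N: "N > 0" and rb: "\<And>t. t\<in>{0..T} \<Longrightarrow> \<bar>D N t\<bar> * T^N / fact N \<le> \<epsilon>"
      using small[OF eps] by blast
    have "\<exists>t. 0 < t \<and> t < T \<and>
      D 0 0 = (\<Sum>m<N. (D m T / fact m) * (0 - T)^m) + (D N t / fact N) * (0 - T)^N"
      by (rule Taylor_down[of N D "D 0" 0 T T]) (use N T deriv in auto)
    then obtain t where t: "0 < t" "t < T" and eq:
      "D 0 0 = (\<Sum>m<N. (D m T / fact m) * (0 - T)^m) + (D N t / fact N) * (0 - T)^N"
      by blast
    have "\<bar>\<Sum>m<N. (D m T / fact m) * (0 - T)^m\<bar> \<le> (\<Sum>m<N. \<bar>(D m T / fact m) * (0 - T)^m\<bar>)"
      by (rule sum_abs)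
    also have "\<dots> = (\<Sum>m<N. \<bar>D m T\<bar> * T^m / fact m)"
    proof (rule sum.cong)
      fix m assume "m \<in> {..<N}"
      have "\<bar>(0 - T)^m\<bar> = T^m" using T by (simp add: power_abs)
      then show "\<bar>(D m T / fact m) * (0 - T)^m\<bar> = \<bar>D m T\<bar> * T^m / fact m"
        by (simp add: abs_mult)
    qed simp
    also have "\<dots> \<le> \<epsilon>" by (rule sb)
    finally have 1: "\<bar>\<Sum>m<N. (D m T / fact m) * (0 - T)^m\<bar> \<le> \<epsilon>" .
    have "\<bar>(D N t / fact N) * (0 - T)^N\<bar> = \<bar>D N t\<bar> * T^N / fact N"
      using T by (simp add: abs_mult power_abs)
    also have "\<dots> \<le> \<epsilon>" using rb t by auto
    finally have 2: "\<bar>(D N t / fact N) * (0 - T)^N\<bar> \<le> \<epsilon>" .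
    show ?thesis using 1 2 eq by linarith
  qed
  show ?thesis
  proof (rule ccontr)
    assume "D 0 0 \<noteq> 0"
    then have "\<bar>D 0 0\<bar> \<le> 2 * (\<bar>D 0 0\<bar>/4)" by (intro key) auto
    with \<open>D 0 0 \<noteq> 0\<close> show False by auto
  qed
qed

lemma exp_partial_le:
  fixes x :: real assumes "0 \<le> x"
  shows "(\<Sum>n<N. x^n / fact n) \<le> exp x"
proof -
  have s: "(\<lambda>n. x^n / fact n) sums exp x"
    using exp_converges[of x] by (simp add: divide_inverse mult.commute)
  show ?thesis
    using sum_le_suminf[OF sums_summable[OF s], of "{..<N}"] sums_unique[OF s] assms by auto
qed

lemma pow_fact_le_exp:
  "real n ^ n / fact n \<le> exp (real n)"
proof -
  have s: "(\<lambda>k. real n^k / fact k) sums exp (real n)"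
    using exp_converges[of "real n"] by (simp add: divide_inverse mult.commute)
  show ?thesis
    using sum_le_suminf[OF sums_summable[OF s], of "{n}"] sums_unique[OF s] by auto
qed

lemma pow_fact_tendsto_zero:
  fixes x :: real
  shows "(\<lambda>n. x^n / fact n) \<longlonglongrightarrow> 0"
proof -
  have s: "summable (\<lambda>n. x^n / fact n)"
    using summable_exp[of x] by (simp add: divide_inverse mult.commute)
  show ?thesis using summable_LIMSEQ_zero[OF s] .
qed




lemma ev_small:
  fixes g :: "nat \<Rightarrow> real"
  assumes "g \<longlonglongrightarrow> 0" "\<epsilon> > 0"
  obtains m where "\<And>n. n \<ge> m \<Longrightarrow> g n < \<epsilon>"
proof -
  have "eventually (\<lambda>n. g n < \<epsilon>) sequentially"
    using order_tendstoD(2)[OF assms(1)] assms(2) by auto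
  then show ?thesis using that unfolding eventually_sequentially by blast
qed

lemma zero_est2:
  fixes D :: "nat \<Rightarrow> real \<Rightarrow> real"
  assumes deriv: "\<And>n t. 0 \<le> t \<Longrightarrow> (D n has_real_derivative D (Suc n) t) (at t)"
  and K: "K \<ge> 0"
  and b1: "\<And>n t. 0 \<le> t \<Longrightarrow> \<bar>D n t\<bar> \<le> K * (1/4)^n"
  and b2: "\<And>n m t. 0 < t \<Longrightarrow> \<bar>D n t\<bar> * t^m \<le> K * (1/4)^(n+m) * fact m"
  shows "D 0 0 = 0"
proof (rule taylor_zero[where D=D, OF deriv])
  fix \<epsilon> :: real assume \<epsilon>: "\<epsilon> > 0"
  have e2: "exp (1/2::real) \<le> 2" using exp_bound_lemma[of "1/2::real"] by simp
  have e4: "exp (1/4::real) \<le> 2" using e2 exp_le_cancel_iff[of "1/4::real" "1/2"] by linarith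
  have "(\<lambda>m. K * (1/2::real)^m) \<longlonglongrightarrow> 0"
    by (intro tendsto_mult_right_zero LIMSEQ_power_zero) auto
  then obtain m0 where m0: "\<And>m. m \<ge> m0 \<Longrightarrow> K * (1/2::real)^m < \<epsilon>"
    using ev_small \<epsilon> by blast
  define m where "m = Suc m0"
  define T where "T = real m"
  have T: "T > 0" unfolding T_def m_def by simp
  have sum_b: "(\<Sum>n<N. \<bar>D n T\<bar> * T^n / fact n) \<le> \<epsilon>" for N
  proof -
    define P where "P = K * (1/4)^m * (fact m / T^m)"
    have P0: "P \<ge> 0" unfolding P_def using K T by simp
    have trm: "\<bar>D n T\<bar> * T^n / fact n \<le> P * ((T/4)^n / fact n)" for n
    proof -
      have "\<bar>D n T\<bar> \<le> K * (1/4)^(n+m) * fact m / T^m"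
        using b2[OF T, of n m] T by (simp add: field_simps)
      then have "\<bar>D n T\<bar> * (T^n / fact n) \<le> K * (1/4)^(n+m) * fact m / T^m * (T^n / fact n)"
        by (rule mult_right_mono) (use T in simp)
      also have "\<dots> = P * ((T/4)^n / fact n)"
        unfolding P_def by (simp add: power_add power_divide field_simps)
      finally show ?thesis by simp
    qed
    have "(\<Sum>n<N. \<bar>D n T\<bar> * T^n / fact n) \<le> (\<Sum>n<N. P * ((T/4)^n / fact n))"
      by (rule sum_mono) (rule trm)
    also have "\<dots> = P * (\<Sum>n<N. (T/4)^n / fact n)" by (simp add: sum_distrib_left)
    also have "\<dots> \<le> P * exp (T/4)"
      by (rule mult_left_mono[OF exp_partial_le P0]) (use T in simp)
    also have "\<dots> \<le> K * (1/4)^m * exp (T/4)"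
    proof -
      have "fact m \<le> T^m" using fact_le_power[of m, where 'a=real] unfolding T_def by simp
      then have "fact m / T^m \<le> 1" using T by simp
      then have "P \<le> K * (1/4)^m * 1" unfolding P_def using K
        by (intro mult_left_mono) auto
      then show ?thesis by (simp add: mult_right_mono)
    qed
    also have "exp (T/4) = exp (1/4) ^ m"
      using exp_of_nat_mult[of m "1/4::real"] unfolding T_def by (simp add: field_simps)
    also have "K * (1/4)^m * exp (1/4) ^ m \<le> K * (1/2)^m"
    proof -
      have "(1/4::real)^m * exp (1/4) ^ m = (exp (1/4) / 4)^m" by (simp add: power_divide field_simps)
      also have "\<dots> \<le> (1/2)^m" by (rule power_mono) (use e4 in auto)
      finally show ?thesis using K by (simp add: mult.assoc mult_left_mono)
    qed
    also have "\<dots> \<le> \<epsilon>" using m0[of m] unfolding m_def by simp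
    finally show ?thesis .
  qed
  have "(\<lambda>N. K * ((T/4)^N / fact N)) \<longlonglongrightarrow> 0"
    by (intro tendsto_mult_right_zero pow_fact_tendsto_zero)
  then obtain N0 where N0: "\<And>N. N \<ge> N0 \<Longrightarrow> K * ((T/4)^N / fact N) < \<epsilon>"
    using ev_small \<epsilon> by blast
  define N where "N = Suc N0"
  have rem: "\<forall>t\<in>{0..T}. \<bar>D N t\<bar> * T^N / fact N \<le> \<epsilon>"
  proof
    fix t assume "t \<in> {0..T}"
    then have "\<bar>D N t\<bar> \<le> K * (1/4)^N" using b1 by auto
    then have "\<bar>D N t\<bar> * (T^N / fact N) \<le> K * (1/4)^N * (T^N / fact N)"
      by (rule mult_right_mono) (use T in simp)
    also have "\<dots> = K * ((T/4)^N / fact N)" by (simp add: power_divide field_simps)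
    also have "\<dots> \<le> \<epsilon>" using N0[of N] unfolding N_def by simp
    finally show "\<bar>D N t\<bar> * T^N / fact N \<le> \<epsilon>" by simp
  qed
  show "\<exists>T>0. (\<forall>N. (\<Sum>n<N. \<bar>D n T\<bar> * T^n / fact n) \<le> \<epsilon>)
        \<and> (\<exists>N>0. \<forall>t\<in>{0..T}. \<bar>D N t\<bar> * T^N / fact N \<le> \<epsilon>)"
    using T sum_b rem unfolding N_def by blast
qed




lemma e_le4: "exp (1::real) \<le> 4"
proof -
  have e2: "exp (1/2::real) \<le> 2" using exp_bound_lemma[of "1/2::real"] by simp
  have "exp (1::real) = exp (1/2) * exp (1/2)" by (simp flip: exp_add)
  also have "\<dots> \<le> 2 * 2" by (rule mult_mono) (use e2 in auto)
  finally show ?thesis by simp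
qed

lemma amgm_term:
  fixes y :: real assumes y: "y \<ge> 0"
  shows "y^n * sqrt (real n ^ n) / fact n \<le> ((4 * exp 1 * y^2)^n / fact n + (1/4)^n) / 2"
proof -
  define a where "a = (exp 1 * y^2)^n / fact n"
  have a0: "a \<ge> 0" unfolding a_def by simp
  have fe: "real n ^ n / fact n \<le> exp 1 ^ n"
    using pow_fact_le_exp[of n] exp_of_nat_mult[of n "1::real"] by simp
  have "(y^n * sqrt (real n ^ n) / fact n)^2 = y^(2*n) * (real n ^ n / fact n) / fact n"
    by (simp add: power_mult_distrib power_divide power2_eq_square power_mult field_simps)
  also have "\<dots> \<le> y^(2*n) * exp 1 ^ n / fact n"
    by (intro divide_right_mono mult_left_mono fe) (use y in auto)
  also have "\<dots> = a" unfolding a_def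
    by (simp add: power_mult_distrib power_mult field_simps flip: power_mult)
  finally have sq: "(y^n * sqrt (real n ^ n) / fact n)^2 \<le> a" .
  have l0: "y^n * sqrt (real n ^ n) / fact n \<ge> 0" using y by simp
  have 1: "y^n * sqrt (real n ^ n) / fact n \<le> sqrt a"
    using sq l0 real_le_rsqrt by blast
  define u where "u = sqrt (4^n * a)"
  define v where "v = sqrt ((1/4::real)^n)"
  have "sqrt a = u * v" unfolding u_def v_def
    by (simp add: real_sqrt_mult[symmetric] power_divide field_simps)
  also have "\<dots> \<le> (u^2 + v^2) / 2"
    using sum_squares_bound[of u v] by (simp add: power2_eq_square)
  also have "u^2 = 4^n * a" unfolding u_def using a0 by simp
  also have "v^2 = (1/4)^n" unfolding v_def by simp
  also have "4^n * a = (4 * exp 1 * y^2)^n / fact n" unfolding a_def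
    by (simp add: power_mult_distrib field_simps)
  finally show ?thesis using 1 by linarith
qed

lemma geom4: "(\<Sum>n<N. (1/4::real)^n) \<le> 4/3"
proof -
  have s: "(\<lambda>n. (1/4::real)^n) sums (1 / (1 - 1/4))" by (rule geometric_sums) simp
  show ?thesis using sum_le_suminf[OF sums_summable[OF s], of "{..<N}"] sums_unique[OF s] by auto
qed

lemma zero_est1:
  fixes D :: "nat \<Rightarrow> real \<Rightarrow> real"
  assumes deriv: "\<And>n t. 0 \<le> t \<Longrightarrow> (D n has_real_derivative D (Suc n) t) (at t)"
  and K: "K \<ge> 0" and c: "c > 0"
  and b1: "\<And>n t. 0 \<le> t \<Longrightarrow> \<bar>D n t\<bar> * sqrt c ^ n \<le> K * (1/8)^n * sqrt (real n ^ n)"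
  and b2: "\<And>n m t. 0 < t \<Longrightarrow> \<bar>D n t\<bar> * sqrt t ^ (n+m)
            \<le> K * (1/8)^(n+m) * sqrt (real m ^ m) * sqrt (real n ^ n)"
  shows "D 0 0 = 0"
proof (rule taylor_zero[where D=D, OF deriv])
  fix \<epsilon> :: real assume \<epsilon>: "\<epsilon> > 0"
  have e2: "exp (1/2::real) \<le> 2" using exp_bound_lemma[of "1/2::real"] by simp
  have e16: "exp (exp 1 / 16) \<le> (2::real)"
  proof -
    have "exp 1 / 16 \<le> (1/2::real)" using e_le4 by simp
    then have "exp (exp 1 / 16) \<le> exp (1/2::real)" by simp
    then show ?thesis using e2 by linarith
  qed
  have "(\<lambda>m. K * (1/4::real)^m) \<longlonglongrightarrow> 0"
    by (intro tendsto_mult_right_zero LIMSEQ_power_zero) auto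
  then obtain m0 where m0: "\<And>m. m \<ge> m0 \<Longrightarrow> K * (1/4::real)^m < \<epsilon>"
    using ev_small \<epsilon> by blast
  define m where "m = Suc m0"
  define T where "T = real m"
  have T: "T > 0" unfolding T_def m_def by simp
  have sT: "sqrt T > 0" using T by simp
  have sum_b: "(\<Sum>n<N. \<bar>D n T\<bar> * T^n / fact n) \<le> \<epsilon>" for N
  proof -
    define P where "P = K * (1/8::real)^m"
    have P0: "P \<ge> 0" unfolding P_def using K by simp
    have trm: "\<bar>D n T\<bar> * T^n / fact n \<le> P * (((exp 1 * T / 16)^n / fact n + (1/4)^n) / 2)" for n
    proof -
      have smm: "sqrt (real m ^ m) = sqrt T ^ m" unfolding T_def by (simp add: real_sqrt_power)
      have "\<bar>D n T\<bar> * sqrt T ^ (n+m) \<le> K * (1/8)^(n+m) * sqrt T ^ m * sqrt (real n ^ n)"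
        using b2[OF T, of n m] smm by simp
      then have "\<bar>D n T\<bar> * sqrt T ^ n * sqrt T ^ m \<le> (K * (1/8)^(n+m) * sqrt (real n ^ n)) * sqrt T ^ m"
        by (simp add: power_add mult_ac)
      then have A: "\<bar>D n T\<bar> * sqrt T ^ n \<le> K * (1/8)^(n+m) * sqrt (real n ^ n)"
        using sT by (simp add: mult_le_cancel_right)
      have tt: "sqrt T ^ n * sqrt T ^ n = T ^ n" using T by (simp add: power_mult_distrib[symmetric])
      have "\<bar>D n T\<bar> * T^n / fact n = (\<bar>D n T\<bar> * sqrt T ^ n) * sqrt T ^ n / fact n"
        by (simp add: tt[symmetric] mult.assoc)
      also have "\<dots> \<le> (K * (1/8)^(n+m) * sqrt (real n ^ n)) * sqrt T ^ n / fact n"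
        by (intro divide_right_mono mult_right_mono A) (use T in auto)
      also have "\<dots> = P * ((sqrt T / 8)^n * sqrt (real n ^ n) / fact n)"
        unfolding P_def by (simp add: power_add power_divide field_simps)
      also have "\<dots> \<le> P * (((4 * exp 1 * (sqrt T / 8)^2)^n / fact n + (1/4)^n) / 2)"
        by (intro mult_left_mono amgm_term P0) (use T in auto)
      also have "(4 * exp 1 * (sqrt T / 8)^2) = exp 1 * T / 16"
        using T by (simp add: power_divide)
      finally show ?thesis .
    qed
    have "(\<Sum>n<N. \<bar>D n T\<bar> * T^n / fact n)
        \<le> (\<Sum>n<N. P * (((exp 1 * T / 16)^n / fact n + (1/4)^n) / 2))"
      by (rule sum_mono) (rule trm)
    also have "\<dots> = P * (\<Sum>n<N. ((exp 1 * T / 16)^n / fact n + (1/4)^n) / 2)"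
      by (simp add: sum_distrib_left)
    also have "\<dots> = P * (((\<Sum>n<N. (exp 1 * T / 16)^n / fact n) + (\<Sum>n<N. (1/4::real)^n)) / 2)"
      by (simp add: sum_divide_distrib[symmetric] sum.distrib)
    also have "\<dots> \<le> P * ((exp (exp 1 * T / 16) + 4/3) / 2)"
      by (intro mult_left_mono P0 divide_right_mono add_mono exp_partial_le geom4) (use T in auto)
    also have "exp (exp 1 * T / 16) = exp (exp 1 / 16) ^ m"
      using exp_of_nat_mult[of m "exp 1 / 16 :: real"] unfolding T_def by (simp add: field_simps)
    also have "exp (exp 1 / 16) ^ m \<le> (2::real) ^ m"
      by (rule power_mono[OF e16]) simp
    then have "P * ((exp (exp 1 / 16) ^ m + 4/3) / 2) \<le> P * ((2 ^ m + 4/3) / 2)"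
      by (intro mult_left_mono P0) auto
    also have "(2::real) ^ m + 4/3 \<le> 2 * 2^m"
    proof -
      have "(2::real) ^ m \<ge> 2" unfolding m_def by (simp add: power_Suc) 
      then show ?thesis by simp
    qed
    then have "P * ((2 ^ m + 4/3) / 2) \<le> P * 2^m"
      by (intro mult_left_mono P0) auto
    also have "P * 2^m = K * (1/4)^m"
      unfolding P_def by (simp add: power_divide field_simps flip: power_mult_distrib)
    also have "\<dots> \<le> \<epsilon>" using m0[of m] unfolding m_def by simp
    finally show ?thesis by linarith
  qed
  define y where "y = T / (8 * sqrt c)"
  have y0: "y \<ge> 0" unfolding y_def using T c by simp
  have "(\<lambda>N. K * (((4 * exp 1 * y^2)^N / fact N + (1/4)^N) / 2)) \<longlonglongrightarrow> K * ((0 + 0) / 2)"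
    by (intro tendsto_mult tendsto_const tendsto_divide tendsto_add pow_fact_tendsto_zero
        LIMSEQ_power_zero) auto
  then have "(\<lambda>N. K * (((4 * exp 1 * y^2)^N / fact N + (1/4)^N) / 2)) \<longlonglongrightarrow> 0" by simp
  then obtain N0 where N0: "\<And>N. N \<ge> N0 \<Longrightarrow> K * (((4 * exp 1 * y^2)^N / fact N + (1/4)^N) / 2) < \<epsilon>"
    using ev_small \<epsilon> by blast
  define N where "N = Suc N0"
  have rem: "\<forall>t\<in>{0..T}. \<bar>D N t\<bar> * T^N / fact N \<le> \<epsilon>"
  proof
    fix t assume "t \<in> {0..T}"
    then have "\<bar>D N t\<bar> * sqrt c ^ N \<le> K * (1/8)^N * sqrt (real N ^ N)" using b1 by auto
    then have A: "\<bar>D N t\<bar> \<le> K * (1/8)^N * sqrt (real N ^ N) / sqrt c ^ N"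
      using c by (simp add: field_simps)
    have "\<bar>D N t\<bar> * T^N / fact N \<le> (K * (1/8)^N * sqrt (real N ^ N) / sqrt c ^ N) * T^N / fact N"
      by (intro divide_right_mono mult_right_mono A) (use T in auto)
    also have "\<dots> = K * (y^N * sqrt (real N ^ N) / fact N)"
      unfolding y_def using c by (simp add: power_divide power_mult_distrib field_simps)
    also have "\<dots> \<le> K * (((4 * exp 1 * y^2)^N / fact N + (1/4)^N) / 2)"
      by (intro mult_left_mono amgm_term y0 K)
    also have "\<dots> \<le> \<epsilon>" using N0[of N] unfolding N_def by simp
    finally show "\<bar>D N t\<bar> * T^N / fact N \<le> \<epsilon>" .
  qed
  show "\<exists>T>0. (\<forall>N. (\<Sum>n<N. \<bar>D n T\<bar> * T^n / fact n) \<le> \<epsilon>)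
        \<and> (\<exists>N>0. \<forall>t\<in>{0..T}. \<bar>D N t\<bar> * T^N / fact N \<le> \<epsilon>)"
    using T sum_b rem unfolding N_def by blast
qed




definition ei :: "'d \<Rightarrow> nat \<Rightarrow> ('d \<Rightarrow> nat)" where
  "ei i n = (\<lambda>j. if j = i then n else 0)"

lemma idx_list_prop: "distinct (idx_list :: 'd::finite list) \<and> set (idx_list :: 'd list) = UNIV"
proof -
  obtain xs :: "'d list" where "set xs = UNIV \<and> distinct xs"
    using finite_distinct_list[of "UNIV :: 'd set"] by auto
  then have "\<exists>xs::'d list. distinct xs \<and> set xs = UNIV" by blast
  from someI_ex[OF this] show ?thesis unfolding idx_list_def .
qed

lemma concat_rep_none:
  "i \<notin> set xs \<Longrightarrow> concat (map (\<lambda>j. replicate (ei i n j) j) xs) = []"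
  by (induction xs) (auto simp: ei_def)

lemma concat_rep:
  "distinct xs \<Longrightarrow> i \<in> set xs \<Longrightarrow> concat (map (\<lambda>j. replicate (ei i n j) j) xs) = replicate n i"
proof (induction xs)
  case Nil then show ?case by simp
next
  case (Cons x xs)
  show ?case
  proof (cases "x = i")
    case True
    then have "i \<notin> set xs" using Cons.prems by auto
    then show ?thesis using True concat_rep_none[of i xs n] by (simp add: ei_def)
  next
    case False
    then show ?thesis using Cons by (simp add: ei_def)
  qed
qed

lemma Dp_ei: "Dp (ei i n) f = dpl (replicate n i) (f :: real^'d::finite \<Rightarrow> real)"
proof -
  have "concat (map (\<lambda>j. replicate (ei i n j) j) (idx_list :: 'd list)) = replicate n i"
    by (rule concat_rep) (use idx_list_prop[where 'd='d] in auto)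
  then show ?thesis unfolding Dp_def by simp
qed

lemma mabs_ei: "mabs (ei i n) = n"
  unfolding mabs_def ei_def by simp

lemma xpow_ei: "xpow x (ei i m) = (x $ i) ^ m"
proof -
  have "xpow x (ei i m) = (\<Prod>j\<in>UNIV. if j = i then (x $ i) ^ m else 1)"
    unfolding xpow_def ei_def by (rule prod.cong) auto
  then show ?thesis by simp
qed

lemma xpow_half_ei: assumes "x \<in> orth"
  shows "xpow_half x (ei i n) (ei i m) = (x $ i) powr ((real n + real m) / 2)"
proof -
  have "xpow_half x (ei i n) (ei i m) = (\<Prod>j\<in>UNIV. if j = i then (x $ i) powr ((real n + real m) / 2) else 1)"
  proof -
    have nz: "x $ j \<noteq> 0" for j using assms unfolding orth_def by (metis less_irrefl mem_Collect_eq)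
    show ?thesis unfolding xpow_half_def ei_def using nz by (intro prod.cong) auto
  qed
  then show ?thesis by simp
qed

lemma kpow_ei: "kpow 1 (ei i m) = sqrt (real m ^ m)"
proof -
  have "kpow 1 (ei i m) = (\<Prod>j\<in>UNIV. if j = i then sqrt (real m ^ m) else 1)"
    unfolding kpow_def ei_def by (intro prod.cong) (auto simp: powr_half_sqrt)
  then show ?thesis by simp
qed

lemma axis_comp: "(y + s *\<^sub>R axis i 1) $ j = y $ j + (if j = i then s else 0)"
  by (simp add: axis_def)

lemma open_orth: "open (orth :: (real^'d::finite) set)"
proof -
  have e: "orth = (\<Inter>j\<in>(UNIV::'d set). {x::real^'d. 0 < x $ j})" unfolding orth_def by auto
  have "open (\<Inter>j\<in>(UNIV::'d set). {x::real^'d. 0 < x $ j})"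
    by (rule open_INT) (auto intro!: open_Collect_less continuous_intros)
  then show ?thesis using e by simp
qed

lemma dpl_deriv:
  fixes f :: "real^'d::finite \<Rightarrow> real"
  assumes sm: "smooth_on orth f" and z: "y + s0 *\<^sub>R axis i 1 \<in> orth"
  shows "((\<lambda>s. dpl is f (y + s *\<^sub>R axis i 1)) has_real_derivative
           dpl (i # is) f (y + s0 *\<^sub>R axis i 1)) (at s0)"
proof -
  define z where "z = y + s0 *\<^sub>R axis i 1"
  define g where "g = (\<lambda>t. dpl is f (z + t *\<^sub>R axis i 1))"
  have "g differentiable (at 0)" using sm z unfolding smooth_on_def g_def z_def by blast
  then have "(g has_real_derivative deriv g 0) (at 0)"
    using DERIV_deriv_iff_real_differentiable by blast
  moreover have "deriv g 0 = dpl (i # is) f z" unfolding g_def by (simp add: partial_def)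
  ultimately have "(g has_real_derivative dpl (i # is) f z) (at (s0 + - s0))" by simp
  then have "((\<lambda>s. g (s + - s0)) has_real_derivative dpl (i # is) f z) (at s0)"
    by (simp only: DERIV_shift)
  moreover have "(\<lambda>s. g (s + - s0)) = (\<lambda>s. dpl is f (y + s *\<^sub>R axis i 1))"
    unfolding g_def z_def by (auto simp: algebra_simps)
  ultimately show ?thesis unfolding z_def by simp
qed

lemma dpl_cont: "smooth_on orth f \<Longrightarrow> continuous_on orth (dpl is f)"
  unfolding smooth_on_def by blast




lemma orth_shift: assumes "x \<in> orth" "0 \<le> t" shows "x + t *\<^sub>R axis i 1 \<in> orth"
proof -
  have "0 < (x + t *\<^sub>R axis i 1) $ j" for j
    using axis_comp[of x t i j] assms unfolding orth_def by (auto intro: add_pos_nonneg)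
  then show ?thesis unfolding orth_def by simp
qed

lemma dpl_zero:
  fixes f :: "real^'d::finite \<Rightarrow> real"
  assumes z: "\<forall>x\<in>orth. f x = 0"
  shows "\<forall>x\<in>orth. dpl is f x = 0"
proof (induction "is")
  case Nil then show ?case using z by simp
next
  case (Cons i js)
  show ?case
  proof
    fix x :: "real^'d" assume x: "x \<in> orth"
    define g where "g = (\<lambda>t. dpl js f (x + t *\<^sub>R axis i 1))"
    have "((\<lambda>t. x + t *\<^sub>R axis i 1) \<longlongrightarrow> x + 0 *\<^sub>R axis i 1) (at 0)"
      by (intro tendsto_eq_intros) auto
    then have "eventually (\<lambda>t. x + t *\<^sub>R axis i 1 \<in> orth) (at 0)"
      using topological_tendstoD[OF _ open_orth] x by auto
    then have ev: "eventually (\<lambda>t. g t = (\<lambda>_. 0) t) (at 0)"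
      by eventually_elim (use Cons.IH in \<open>auto simp: g_def\<close>)
    have g0: "g 0 = 0" unfolding g_def using Cons.IH x by simp
    have "((\<lambda>_. 0::real) has_field_derivative 0) (at 0)" by simp
    then have "(g has_field_derivative 0) (at 0)"
      using has_field_derivative_cong_eventually[OF ev, of 0] g0 by simp
    then have "deriv g 0 = 0" by (rule DERIV_imp_deriv)
    then show "dpl (i # js) f x = 0" by (simp add: partial_def g_def)
  qed
qed

lemma iii_zero:
  fixes f :: "real^'d::finite \<Rightarrow> real"
  assumes sm: "smooth_on orth f"
  and H: "\<forall>h>0. \<exists>C>0. \<forall>k p. \<forall>x\<in>orth. \<bar>xpow x k * Dp p f x\<bar>
               \<le> C * h ^ (mabs p + mabs k) * fact (mabs k)"
  shows "\<forall>x\<in>orth. f x = 0"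
proof
  fix x0 :: "real^'d" assume x0: "x0 \<in> orth"
  obtain C where C: "C > 0" and HC: "\<And>k p x. x \<in> orth \<Longrightarrow> \<bar>xpow x k * Dp p f x\<bar>
               \<le> C * (1/4) ^ (mabs p + mabs k) * fact (mabs k)"
    using H[rule_format, of "1/4"] by auto
  fix i :: 'd
  define D where "D = (\<lambda>n t. dpl (replicate n i) f (x0 + t *\<^sub>R axis i 1))"
  have "D 0 0 = 0"
  proof (rule zero_est2[where K=C])
    show "(D n has_real_derivative D (Suc n) t) (at t)" if "0 \<le> t" for n t
      unfolding D_def using dpl_deriv[OF sm orth_shift[OF x0 that], of "replicate n i"] by simp
    show "C \<ge> 0" using C by simp
    show "\<bar>D n t\<bar> \<le> C * (1/4)^n" if "0 \<le> t" for n t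
      using HC[OF orth_shift[OF x0 that, of i], of "ei i 0" "ei i n"]
      by (simp add: D_def Dp_ei mabs_ei xpow_ei)
    show "\<bar>D n t\<bar> * t^m \<le> C * (1/4)^(n+m) * fact m" if t: "0 < t" for n m t
    proof -
      define y where "y = x0 + t *\<^sub>R axis i 1"
      have y: "y \<in> orth" unfolding y_def using orth_shift[OF x0] t by simp
      have "0 < x0 $ i" using x0 by (simp add: orth_def)
      then have yi: "y $ i \<ge> t" unfolding y_def using axis_comp[of x0 t i i] by simp
      have "\<bar>D n t\<bar> * t^m \<le> \<bar>D n t\<bar> * (y $ i)^m"
        by (intro mult_left_mono power_mono) (use t yi in auto)
      also have "\<dots> = \<bar>xpow y (ei i m) * Dp (ei i n) f y\<bar>"
        using yi t by (simp add: xpow_ei Dp_ei D_def y_def abs_mult)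
      also have "\<dots> \<le> C * (1/4)^(n+m) * fact m"
        using HC[OF y, of "ei i m" "ei i n"] by (simp add: mabs_ei)
      finally show ?thesis .
    qed
  qed
  then show "f x0 = 0" by (simp add: D_def)
qed




lemma box_bound:
  fixes G W :: "real^'d::finite \<Rightarrow> real" and v :: "real^'d"
  assumes contG: "continuous_on (cbox a b) (\<lambda>y. G (y + v))"
  and ptw: "\<And>y. y \<in> cbox a b \<Longrightarrow> \<omega> * \<bar>G (y + v)\<bar> \<le> \<bar>W (y + v)\<bar> \<and> y + v \<in> orth"
  and L2: "(\<integral>\<^sup>+x\<in>orth. ennreal ((W x)^2) \<partial>lborel) \<le> ennreal (R^2)"
  and om: "\<omega> > 0" and R: "R > 0"
  shows "\<bar>integral (cbox a b) (\<lambda>y. G (y + v))\<bar> \<le> (Henstock_Kurzweil_Integration.content (cbox a b) + 1) / 2 * (R / \<omega>)"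
proof -
  define Q where "Q = (\<lambda>y. (G (y + v))^2)"
  have contQ: "continuous_on (cbox a b) Q" unfolding Q_def by (intro continuous_intros contG)
  have intQ: "Q integrable_on cbox a b" by (rule integrable_continuous[OF contQ])
  define I where "I = integral (cbox a b) Q"
  have hQ: "(Q has_integral I) (cbox a b)" unfolding I_def by (rule integrable_integral[OF intQ])
  define \<Omega> where "\<Omega> = (\<lambda>x. x + v) ` cbox a b"
  have "((\<lambda>x. Q (1 *\<^sub>R x + - v)) has_integral (1 / (\<bar>1\<bar> ^ DIM(real^'d))) *\<^sub>R I)
      ((\<lambda>x. (1 / 1) *\<^sub>R x + - ((1 / 1) *\<^sub>R (- v))) ` cbox a b)"
    by (rule has_integral_affinity[OF hQ]) simp
  then have "((\<lambda>x. (G x)^2) has_integral I) \<Omega>" unfolding \<Omega>_def Q_def by simp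
  then have hG: "((\<lambda>x. \<omega>^2 * (G x)^2) has_integral \<omega>^2 * I) \<Omega>"
    by (rule has_integral_mult_right)
  have "ennreal (\<omega>^2 * I) = (\<integral>\<^sup>+ x. ennreal (\<omega>^2 * (G x)^2) * indicator \<Omega> x \<partial>lborel)"
    by (rule nn_integral_has_integral_lebesgue'[OF _ hG, symmetric]) simp
  also have "\<dots> \<le> (\<integral>\<^sup>+ x. ennreal ((W x)^2) * indicator orth x \<partial>lborel)"
  proof (rule nn_integral_mono)
    fix x
    show "ennreal (\<omega>^2 * (G x)^2) * indicator \<Omega> x \<le> ennreal ((W x)^2) * indicator orth x"
    proof (cases "x \<in> \<Omega>")
      case True
      then obtain y where y: "y \<in> cbox a b" and xy: "x = y + v" unfolding \<Omega>_def by auto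
      have p: "\<omega> * \<bar>G x\<bar> \<le> \<bar>W x\<bar>" and xo: "x \<in> orth" using ptw[OF y] xy by auto
      have "(\<omega> * \<bar>G x\<bar>)^2 \<le> \<bar>W x\<bar>^2"
        by (rule power_mono[OF p]) (use om in simp)
      then have "\<omega>^2 * (G x)^2 \<le> (W x)^2" by (simp add: power_mult_distrib)
      then show ?thesis using True xo by (simp add: ennreal_leI)
    next
      case False then show ?thesis by simp
    qed
  qed
  also have "\<dots> \<le> ennreal (R^2)" using L2 by simp
  finally have "\<omega>^2 * I \<le> R^2" by (subst (asm) ennreal_le_iff) auto
  then have IR: "I \<le> R^2 / \<omega>^2" using om by (simp add: field_simps)
  define l where "l = R / \<omega>"
  have l: "l > 0" unfolding l_def using om R by simp
  define H where "H = (\<lambda>y. (l + Q y / l) / 2)"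
  have pt: "\<bar>G (y + v)\<bar> \<le> H y" for y
  proof -
    have "0 \<le> (l - \<bar>G (y + v)\<bar>)^2" by simp
    then have "2 * l * \<bar>G (y + v)\<bar> \<le> l^2 + (G (y + v))^2"
      by (simp add: power2_eq_square algebra_simps)
    then show ?thesis unfolding H_def Q_def using l
      by (simp add: field_simps power2_eq_square)
  qed
  have hc: "((\<lambda>x. l) has_integral l * Henstock_Kurzweil_Integration.content (cbox a b)) (cbox a b)"
    using has_integral_const[of l a b] by (simp add: mult.commute)
  have hH: "(H has_integral (l * Henstock_Kurzweil_Integration.content (cbox a b) + I / l) / 2) (cbox a b)"
    unfolding H_def
    by (intro has_integral_divide has_integral_add hc hQ)
  have intG: "(\<lambda>y. G (y + v)) integrable_on cbox a b" by (rule integrable_continuous[OF contG])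
  have "integral (cbox a b) (\<lambda>y. G (y + v)) \<le> integral (cbox a b) H"
    by (rule integral_le[OF intG has_integral_integrable[OF hH]]) (use pt in \<open>auto simp: abs_le_iff\<close>)
  moreover have "- integral (cbox a b) (\<lambda>y. G (y + v)) \<le> integral (cbox a b) H"
  proof -
    have "integral (cbox a b) (\<lambda>y. - G (y + v)) \<le> integral (cbox a b) H"
      by (rule integral_le[OF integrable_neg[OF intG] has_integral_integrable[OF hH]])
        (use pt in \<open>auto simp: abs_le_iff\<close>)
    then show ?thesis by simp
  qed
  ultimately have "\<bar>integral (cbox a b) (\<lambda>y. G (y + v))\<bar> \<le> integral (cbox a b) H" by linarith
  also have "\<dots> = (l * Henstock_Kurzweil_Integration.content (cbox a b) + I / l) / 2" using hH by (rule integral_unique)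
  also have "\<dots> \<le> (l * Henstock_Kurzweil_Integration.content (cbox a b) + (R^2 / \<omega>^2) / l) / 2"
  proof -
    have "I / l \<le> (R^2 / \<omega>^2) / l" using divide_right_mono[OF IR, of l] l by simp
    then show ?thesis by (intro divide_right_mono add_left_mono) (use IR l in auto)
  qed
  also have "(R^2 / \<omega>^2) / l = l" unfolding l_def using om R by (simp add: power2_eq_square field_simps)
  also have "(l * Henstock_Kurzweil_Integration.content (cbox a b) + l) / 2 = (Henstock_Kurzweil_Integration.content (cbox a b) + 1) / 2 * (R / \<omega>)"
    unfolding l_def using om by (simp add: field_simps)
  finally show ?thesis .
qed

lemma L2_sq:
  assumes "L2norm F \<le> ennreal R" "R \<ge> 0"
  shows "(\<integral>\<^sup>+x\<in>orth. ennreal ((F x)^2) \<partial>lborel) \<le> ennreal (R^2)"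
proof -
  define I where "I = (\<integral>\<^sup>+x\<in>orth. ennreal ((F x)^2) \<partial>lborel)"
  have L: "L2norm F = (if I = \<infinity> then \<infinity> else ennreal (sqrt (enn2real I)))"
    unfolding L2norm_def I_def Let_def by simp
  show ?thesis
  proof (cases "I = \<infinity>")
    case True then show ?thesis using assms(1) L by (simp add: top_unique)
  next
    case False
    then have "ennreal (sqrt (enn2real I)) \<le> ennreal R" using assms(1) L by simp
    then have s: "sqrt (enn2real I) \<le> R" using assms(2) by (simp add: ennreal_le_iff)
    have "sqrt (enn2real I)^2 \<le> R^2" by (rule power_mono[OF s]) simp
    then have "enn2real I \<le> R^2" by simp
    then have "ennreal (enn2real I) \<le> ennreal (R^2)" by (rule ennreal_leI)
    moreover have "ennreal (enn2real I) = I" using False by (simp add: ennreal_enn2real_if)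
    ultimately show ?thesis unfolding I_def by simp
  qed
qed






lemma mem_shift_box:
  fixes a y :: "real^'d::finite"
  assumes a: "\<forall>j. 0 < a$j" and y: "y \<in> cbox a b" and s: "-(a$i) < s"
  shows "y + s *\<^sub>R axis i 1 \<in> orth"
proof -
  have "0 < (y + s *\<^sub>R axis i 1) $ j" for j
  proof -
    have ay: "a$j \<le> y$j" using y by (simp add: mem_box_cart)
    have aj: "0 < a$j" using a by simp
    have ac: "(y + s *\<^sub>R axis i 1) $ j = y $ j + (if j = i then s else 0)" by (rule axis_comp)
    show ?thesis
    proof (cases "j = i")
      case True then show ?thesis unfolding ac using ay s by simp
    next
      case False then show ?thesis unfolding ac using ay aj by simp
    qed
  qed
  then show ?thesis unfolding orth_def by simp
qed

lemma Phi_deriv: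
  fixes f :: "real^'d::finite \<Rightarrow> real"
  assumes sm: "smooth_on orth f" and a: "\<forall>j. 0 < a$j" and t: "-(a$i) < t"
  shows "((\<lambda>s. integral (cbox a b) (\<lambda>y. dpl js f (y + s *\<^sub>R axis i 1))) has_real_derivative
          integral (cbox a b) (\<lambda>y. dpl (i # js) f (y + t *\<^sub>R axis i 1))) (at t)"
proof -
  define U where "U = {-(a$i)<..}"
  have tU: "t \<in> U" unfolding U_def using t by simp
  have mem: "y + s *\<^sub>R axis i 1 \<in> orth" if "s \<in> U" "y \<in> cbox a b" for s y
    using mem_shift_box[OF a that(2)] that(1) unfolding U_def by simp
  have "((\<lambda>s. integral (cbox a b) (\<lambda>y. dpl js f (y + s *\<^sub>R axis i 1))) has_field_derivative
          integral (cbox a b) (\<lambda>y. dpl (i # js) f (y + t *\<^sub>R axis i 1))) (at t within U)"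
  proof (rule leibniz_rule_field_derivative[where fx = "\<lambda>s y. dpl (i # js) f (y + s *\<^sub>R axis i 1)"])
    fix s y assume sy: "s \<in> U" "y \<in> cbox a b"
    show "((\<lambda>s. dpl js f (y + s *\<^sub>R axis i 1)) has_field_derivative dpl (i # js) f (y + s *\<^sub>R axis i 1)) (at s within U)"
      using dpl_deriv[OF sm mem[OF sy], of js] has_field_derivative_at_within by blast
  next
    fix s assume s: "s \<in> U"
    have "continuous_on (cbox a b) (\<lambda>y. dpl js f (y + s *\<^sub>R axis i 1))"
      by (rule continuous_on_compose2[OF dpl_cont[OF sm]]) (auto intro!: continuous_intros mem[OF s])
    then show "(\<lambda>y. dpl js f (y + s *\<^sub>R axis i 1)) integrable_on cbox a b"
      by (rule integrable_continuous)
  next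
    have "continuous_on (U \<times> cbox a b) (\<lambda>p. dpl (i # js) f (snd p + fst p *\<^sub>R axis i 1))"
      by (rule continuous_on_compose2[OF dpl_cont[OF sm]]) (auto intro!: continuous_intros mem)
    then show "continuous_on (U \<times> cbox a b) (\<lambda>(s, y). dpl (i # js) f (y + s *\<^sub>R axis i 1))"
      by (simp add: case_prod_unfold)
  next
    show "t \<in> U" by (rule tU)
    show "convex U" unfolding U_def by (rule convex_real_interval)
  qed
  moreover have "open U" unfolding U_def by simp
  ultimately show ?thesis using at_within_open[OF tU] by simp
qed

lemma Z_from_boxes:
  fixes f :: "real^'d::finite \<Rightarrow> real"
  assumes cont: "continuous_on orth f"
  and box0: "\<And>a b. \<forall>j. 0 < a$j \<Longrightarrow> integral (cbox a b) f = 0"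
  shows "\<forall>x\<in>orth. f x = 0"
proof (rule ccontr)
  assume "\<not> (\<forall>x\<in>orth. f x = 0)"
  then obtain x0 where x0: "x0 \<in> orth" and fx: "f x0 \<noteq> 0" by auto
  define \<eta> where "\<eta> = \<bar>f x0\<bar> / 2"
  have eta: "\<eta> > 0" unfolding \<eta>_def using fx by simp
  obtain d where d: "d > 0" and hd: "\<And>x'. x' \<in> orth \<Longrightarrow> dist x' x0 < d \<Longrightarrow> dist (f x') (f x0) < \<eta>"
    using cont x0 eta unfolding continuous_on_iff by blast
  obtain r where r: "r > 0" and br: "ball x0 r \<subseteq> orth"
    using open_orth x0 open_contains_ball by blast
  define \<rho> where "\<rho> = min d r"
  have rho: "\<rho> > 0" unfolding \<rho>_def using d r by simp
  define \<delta> where "\<delta> = \<rho> / (2 * real CARD('d))"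
  have delta: "\<delta> > 0" unfolding \<delta>_def using rho by simp
  define a where "a = x0 - (\<chi> j. \<delta>)"
  define b where "b = x0 + (\<chi> j. \<delta>)"
  have inb: "y \<in> ball x0 \<rho>" if y: "y \<in> cbox a b" for y
  proof -
    have c: "\<bar>(y - x0) $ j\<bar> \<le> \<delta>" for j
    proof -
      have "\<forall>i. x0$i - \<delta> \<le> y$i \<and> y$i \<le> x0$i + \<delta>" using y unfolding a_def b_def by (simp add: mem_box_cart)
      then have "x0$j - \<delta> \<le> y$j \<and> y$j \<le> x0$j + \<delta>" by (rule spec)
      then show ?thesis by (simp add: abs_le_iff)
    qed
    have "norm (y - x0) \<le> (\<Sum>j\<in>UNIV. \<bar>(y - x0) $ j\<bar>)" by (rule norm_le_l1_cart)
    also have "\<dots> \<le> (\<Sum>j\<in>(UNIV::'d set). \<delta>)" by (rule sum_mono) (rule c)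
    also have "\<dots> = \<rho> / 2" unfolding \<delta>_def by simp
    also have "\<dots> < \<rho>" using rho by simp
    finally show ?thesis by (simp add: dist_norm norm_minus_commute)
  qed
  have sub: "cbox a b \<subseteq> orth" using inb br unfolding \<rho>_def by auto
  have close: "\<bar>f y - f x0\<bar> \<le> \<eta>" if y: "y \<in> cbox a b" for y
  proof -
    have "dist y x0 < d" using inb[OF y] unfolding \<rho>_def by (simp add: dist_commute)
    moreover have "y \<in> orth" using sub y by blast
    ultimately show ?thesis using hd[of y] by (simp add: dist_real_def)
  qed
  have ab: "a \<in> cbox a b" unfolding a_def b_def using delta by (simp add: mem_box_cart)
  have apos: "\<forall>j. 0 < a$j" using sub ab unfolding orth_def by auto
  have ne: "cbox a b \<noteq> {}" using ab by auto
  have cpos: "Henstock_Kurzweil_Integration.content (cbox a b) > 0"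
    using content_cbox_cart[OF ne] delta unfolding a_def b_def by simp
  have intf: "f integrable_on cbox a b" by (rule integrable_continuous[OF continuous_on_subset[OF cont sub]])
  have "((\<lambda>y. f y - f x0) has_integral (integral (cbox a b) f - Henstock_Kurzweil_Integration.content (cbox a b) *\<^sub>R f x0)) (cbox a b)"
    by (intro has_integral_diff integrable_integral[OF intf] has_integral_const)
  then have "norm (integral (cbox a b) f - Henstock_Kurzweil_Integration.content (cbox a b) *\<^sub>R f x0) \<le> \<eta> * Henstock_Kurzweil_Integration.content (cbox a b)"
    by (rule has_integral_bound[OF less_imp_le[OF eta]]) (use close in simp)
  then have "\<bar>Henstock_Kurzweil_Integration.content (cbox a b) * f x0\<bar> \<le> \<eta> * Henstock_Kurzweil_Integration.content (cbox a b)" using box0[OF apos] by simp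
  then have "Henstock_Kurzweil_Integration.content (cbox a b) * \<bar>f x0\<bar> \<le> (\<bar>f x0\<bar> / 2) * Henstock_Kurzweil_Integration.content (cbox a b)"
    using cpos unfolding \<eta>_def by (simp add: abs_mult)
  then show False using cpos fx by (simp add: field_simps)
qed


lemma powr_half_pow: assumes "0 < x" shows "x powr ((real n + real m)/2) = sqrt x ^ (n+m)"
proof -
  have "sqrt x ^ (n+m) = (x powr (1/2)) ^ (n+m)" using assms by (simp add: powr_half_sqrt)
  also have "\<dots> = (x powr (1/2)) powr real (n+m)" by (rule powr_realpow[symmetric]) (use assms in simp)
  also have "\<dots> = x powr ((real n + real m)/2)" by (simp add: powr_powr)
  finally show ?thesis by simp
qed

lemma box_est:
  fixes f W :: "real^'d::finite \<Rightarrow> real"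
  assumes sm: "smooth_on orth f" and a: "\<forall>j. 0 < a$j" and t: "0 \<le> t"
  and L2: "L2norm W \<le> ennreal R" and R: "R > 0" and om: "\<omega> > 0"
  and ptw: "\<And>z. z \<in> orth \<Longrightarrow> z$i \<ge> a$i + t \<Longrightarrow> \<omega> * \<bar>dpl (replicate n i) f z\<bar> \<le> \<bar>W z\<bar>"
  shows "\<bar>integral (cbox a b) (\<lambda>y. dpl (replicate n i) f (y + t *\<^sub>R axis i 1))\<bar> * \<omega>
          \<le> (Henstock_Kurzweil_Integration.content (cbox a b) + 1) / 2 * R"
proof -
  have ai: "0 < a$i" using a by simp
  have mem: "y + t *\<^sub>R axis i 1 \<in> orth" if "y \<in> cbox a b" for y
    using mem_shift_box[OF a that, of i t] ai t by simp
  have "\<bar>integral (cbox a b) (\<lambda>y. dpl (replicate n i) f (y + t *\<^sub>R axis i 1))\<bar>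
          \<le> (Henstock_Kurzweil_Integration.content (cbox a b) + 1) / 2 * (R / \<omega>)"
  proof (rule box_bound[where W=W and \<omega>=\<omega> and R=R])
    show "continuous_on (cbox a b) (\<lambda>y. dpl (replicate n i) f (y + t *\<^sub>R axis i 1))"
      by (rule continuous_on_compose2[OF dpl_cont[OF sm]]) (auto intro!: continuous_intros mem)
    fix y assume y: "y \<in> cbox a b"
    have "a$i \<le> y$i" using y by (simp add: mem_box_cart)
    moreover have "(y + t *\<^sub>R axis i 1) $ i = y$i + t" using axis_comp[of y t i i] by simp
    ultimately have "(y + t *\<^sub>R axis i 1) $ i \<ge> a$i + t" by simp
    then show "\<omega> * \<bar>dpl (replicate n i) f (y + t *\<^sub>R axis i 1)\<bar> \<le> \<bar>W (y + t *\<^sub>R axis i 1)\<bar> \<and>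
           y + t *\<^sub>R axis i 1 \<in> orth" using ptw mem[OF y] by blast
  next
    show "(\<integral>\<^sup>+x\<in>orth. ennreal ((W x)^2) \<partial>lborel) \<le> ennreal (R^2)"
      using L2_sq[OF L2] R by simp
  qed (use om R in auto)
  then show ?thesis using om by (simp add: field_simps)
qed

lemma content_nn: "Henstock_Kurzweil_Integration.content (cbox a (b::real^'d::finite)) \<ge> 0"
  by simp

lemma ii_zero:
  fixes f :: "real^'d::finite \<Rightarrow> real"
  assumes sm: "smooth_on orth f"
  and H: "\<forall>h>0. \<exists>C>0. \<forall>k p. L2norm (\<lambda>x. xpow x k * Dp p f x)
               \<le> ennreal (C * h ^ (mabs p + mabs k) * fact (mabs k))"
  shows "\<forall>x\<in>orth. f x = 0"
proof (rule Z_from_boxes)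
  show "continuous_on orth f" using dpl_cont[OF sm, of "[]"] by simp
next
  fix a b :: "real^'d" assume a: "\<forall>j. 0 < a$j"
  obtain C where C: "C > 0" and HC: "\<And>k p. L2norm (\<lambda>x. xpow x k * Dp p f x)
               \<le> ennreal (C * (1/4) ^ (mabs p + mabs k) * fact (mabs k))"
    using H[rule_format, of "1/4"] by auto
  fix i :: 'd
  have ai: "0 < a$i" using a by simp
  define cb where "cb = (Henstock_Kurzweil_Integration.content (cbox a b) + 1) / 2"
  have cb: "cb > 0" unfolding cb_def using content_nn[of a b] by (intro divide_pos_pos add_nonneg_pos) auto
  define D where "D = (\<lambda>n t. integral (cbox a b) (\<lambda>y. dpl (replicate n i) f (y + t *\<^sub>R axis i 1)))"
  have "D 0 0 = 0"
  proof (rule zero_est2[where K = "cb * C"])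
    show "(D n has_real_derivative D (Suc n) t) (at t)" if "0 \<le> t" for n t
      unfolding D_def using Phi_deriv[OF sm a, of i t b "replicate n i"] that ai by simp
    show "0 \<le> cb * C" using cb C by simp
    show "\<bar>D n t\<bar> \<le> cb * C * (1/4)^n" if t: "0 \<le> t" for n t
    proof -
      have L: "L2norm (\<lambda>x. xpow x (ei i 0) * Dp (ei i n) f x) \<le> ennreal (C * (1/4)^n)"
        using HC[of "ei i 0" "ei i n"] by (simp add: mabs_ei)
      have "\<bar>D n t\<bar> * 1 \<le> cb * (C * (1/4)^n)" unfolding D_def cb_def
        by (rule box_est[OF sm a t L]) (use C in \<open>auto simp: xpow_ei Dp_ei\<close>)
      then show ?thesis by (simp add: mult.assoc)
    qed
    show "\<bar>D n t\<bar> * t^m \<le> cb * C * (1/4)^(n+m) * fact m" if t: "0 < t" for n m t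
    proof -
      have L: "L2norm (\<lambda>x. xpow x (ei i m) * Dp (ei i n) f x) \<le> ennreal (C * (1/4)^(n+m) * fact m)"
        using HC[of "ei i m" "ei i n"] by (simp add: mabs_ei)
      have "\<bar>D n t\<bar> * t^m \<le> cb * (C * (1/4)^(n+m) * fact m)" unfolding D_def cb_def
      proof (rule box_est[OF sm a _ L])
        fix z :: "real^'d" assume z: "z \<in> orth" "a$i + t \<le> z$i"
        have "t \<le> z$i" using z ai by simp
        then have "t^m \<le> (z$i)^m" using t by (intro power_mono) auto
        then show "t^m * \<bar>dpl (replicate n i) f z\<bar> \<le> \<bar>xpow z (ei i m) * Dp (ei i n) f z\<bar>"
          using t \<open>t \<le> z$i\<close> by (simp add: xpow_ei Dp_ei abs_mult mult_right_mono)
      qed (use t C in auto)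
      then show ?thesis by (simp add: mult.assoc)
    qed
  qed
  then show "integral (cbox a b) f = 0" by (simp add: D_def)
qed

lemma i_zero:
  fixes f :: "real^'d::finite \<Rightarrow> real"
  assumes sm: "smooth_on orth f" and G: "f \<in> g_alpha 1"
  shows "\<forall>x\<in>orth. f x = 0"
proof (rule Z_from_boxes)
  show "continuous_on orth f" using dpl_cont[OF sm, of "[]"] by simp
next
  fix a b :: "real^'d" assume a: "\<forall>j. 0 < a$j"
  have "f \<in> gaA 1 (1/8)" using G unfolding g_alpha_def by auto
  then obtain B where HB: "\<And>p k. L2norm (\<lambda>x. xpow_half x p k * Dp p f x)
        \<le> ennreal (B * (1/8) ^ (mabs p + mabs k) * kpow 1 k * kpow 1 p)"
    unfolding gaA_def by auto
  define B' where "B' = max B 1"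
  have B': "B' > 0" unfolding B'_def by simp
  have HB': "L2norm (\<lambda>x. xpow_half x (ei i n) (ei i m) * Dp (ei i n) f x)
        \<le> ennreal (B' * (1/8) ^ (n + m) * sqrt (real m ^ m) * sqrt (real n ^ n))" for i n m
  proof -
    have "B * (1/8) ^ (n + m) * sqrt (real m ^ m) * sqrt (real n ^ n)
        \<le> B' * (1/8) ^ (n + m) * sqrt (real m ^ m) * sqrt (real n ^ n)"
      unfolding B'_def by (intro mult_right_mono) auto
    then have X: "ennreal (B * (1/8) ^ (n + m) * sqrt (real m ^ m) * sqrt (real n ^ n))
        \<le> ennreal (B' * (1/8) ^ (n + m) * sqrt (real m ^ m) * sqrt (real n ^ n))" by (rule ennreal_leI)
    have "L2norm (\<lambda>x. xpow_half x (ei i n) (ei i m) * Dp (ei i n) f x)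
        \<le> ennreal (B * (1/8) ^ (n + m) * sqrt (real m ^ m) * sqrt (real n ^ n))"
      using HB[of "ei i n" "ei i m"] by (simp add: mabs_ei kpow_ei)
    then show ?thesis using X by (rule order_trans)
  qed
  fix i :: 'd
  have ai: "0 < a$i" using a by simp
  define cb where "cb = (Henstock_Kurzweil_Integration.content (cbox a b) + 1) / 2"
  have cb: "cb > 0" unfolding cb_def using content_nn[of a b] by (intro divide_pos_pos add_nonneg_pos) auto
  define D where "D = (\<lambda>n t. integral (cbox a b) (\<lambda>y. dpl (replicate n i) f (y + t *\<^sub>R axis i 1)))"
  have pos: "0 < sqrt (real k ^ k)" for k by (cases k) auto
  have "D 0 0 = 0"
  proof (rule zero_est1[where K = "cb * B'" and c = "a$i"])
    show "(D n has_real_derivative D (Suc n) t) (at t)" if "0 \<le> t" for n t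
      unfolding D_def using Phi_deriv[OF sm a, of i t b "replicate n i"] that ai by simp
    show "0 \<le> cb * B'" using cb B' by simp
    show "0 < a$i" by (rule ai)
    show "\<bar>D n t\<bar> * sqrt (a$i) ^ n \<le> cb * B' * (1/8)^n * sqrt (real n ^ n)" if t: "0 \<le> t" for n t
    proof -
      have L: "L2norm (\<lambda>x. xpow_half x (ei i n) (ei i 0) * Dp (ei i n) f x)
          \<le> ennreal (B' * (1/8) ^ n * sqrt (real n ^ n))"
        using HB'[of i n 0] by simp
      have "\<bar>D n t\<bar> * sqrt (a$i) ^ n \<le> cb * (B' * (1/8) ^ n * sqrt (real n ^ n))" unfolding D_def cb_def
      proof (rule box_est[OF sm a t L])
        fix z :: "real^'d" assume z: "z \<in> orth" "a$i + t \<le> z$i"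
        have zi: "a$i \<le> z$i" using z t by simp
        then have "sqrt (a$i) ^ n \<le> sqrt (z$i) ^ n" by (intro power_mono) (use ai in auto)
        moreover have "xpow_half z (ei i n) (ei i 0) = sqrt (z$i) ^ n"
          using xpow_half_ei[OF z(1)] powr_half_pow[of "z$i" n 0] zi ai by simp
        ultimately show "sqrt (a$i) ^ n * \<bar>dpl (replicate n i) f z\<bar> \<le> \<bar>xpow_half z (ei i n) (ei i 0) * Dp (ei i n) f z\<bar>"
          by (simp add: Dp_ei abs_mult mult_right_mono)
      qed (use B' pos ai in auto)
      then show ?thesis by (simp add: mult.assoc)
    qed
    show "\<bar>D n t\<bar> * sqrt t ^ (n+m) \<le> cb * B' * (1/8)^(n+m) * sqrt (real m ^ m) * sqrt (real n ^ n)"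
      if t: "0 < t" for n m t
    proof -
      have "\<bar>D n t\<bar> * sqrt t ^ (n+m) \<le> cb * (B' * (1/8) ^ (n + m) * sqrt (real m ^ m) * sqrt (real n ^ n))"
        unfolding D_def cb_def
      proof (rule box_est[OF sm a _ HB'])
        fix z :: "real^'d" assume z: "z \<in> orth" "a$i + t \<le> z$i"
        have zi: "t \<le> z$i" using z ai by simp
        then have "sqrt t ^ (n+m) \<le> sqrt (z$i) ^ (n+m)" by (intro power_mono) (use t in auto)
        moreover have "xpow_half z (ei i n) (ei i m) = sqrt (z$i) ^ (n+m)"
          using xpow_half_ei[OF z(1)] powr_half_pow[of "z$i" n m] zi t by simp
        ultimately show "sqrt t ^ (n+m) * \<bar>dpl (replicate n i) f z\<bar> \<le> \<bar>xpow_half z (ei i n) (ei i m) * Dp (ei i n) f z\<bar>"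
          by (simp add: Dp_ei abs_mult mult_right_mono)
      qed (use B' pos t in auto)
      then show ?thesis by (simp add: mult.assoc)
    qed
  qed
  then show "integral (cbox a b) f = 0" by (simp add: D_def)
qed


lemma L2_zero:
  assumes "\<forall>x\<in>orth. F x = 0"
  shows "L2norm F = 0"
proof -
  have "(\<lambda>x. ennreal ((F x)^2) * indicator orth x) = (\<lambda>x. 0)"
    using assms by (auto simp: indicator_def fun_eq_iff)
  then have "(\<integral>\<^sup>+x\<in>orth. ennreal ((F x)^2) \<partial>lborel) = 0" by simp
  then show ?thesis unfolding L2norm_def Let_def by simp
qed

lemma Z_conds:
  fixes f :: "real^'d::finite \<Rightarrow> real"
  assumes sm: "smooth_on orth f" and Z: "\<forall>x\<in>orth. f x = 0"
  shows "f \<in> g_alpha 1"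
    and "\<forall>h>0. \<exists>C>0. \<forall>k p. L2norm (\<lambda>x. xpow x k * Dp p f x)
               \<le> ennreal (C * h ^ (mabs p + mabs k) * fact (mabs k))"
    and "\<forall>h>0. \<exists>C>0. \<forall>k p. \<forall>x\<in>orth. \<bar>xpow x k * Dp p f x\<bar>
               \<le> C * h ^ (mabs p + mabs k) * fact (mabs k)"
proof -
  have Dz: "\<forall>x\<in>orth. Dp p f x = 0" for p unfolding Dp_def using dpl_zero[OF Z] by blast
  have sch: "schwartz_half f"
    unfolding schwartz_half_def
  proof (intro conjI allI)
    show "smooth_on orth f" by (rule sm)
    fix \<gamma> :: "'d \<Rightarrow> nat"
    show "\<exists>g. continuous_on orth_closed g \<and> (\<forall>x\<in>orth. g x = Dp \<gamma> f x)"
      by (rule exI[of _ "\<lambda>_. 0"]) (use Dz in auto)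
  next
    fix \<beta> \<gamma> :: "'d \<Rightarrow> nat"
    have "(\<lambda>x. xpow x \<beta> * Dp \<gamma> f x) ` orth \<subseteq> {0}" using Dz by auto
    then show "bounded ((\<lambda>x. xpow x \<beta> * Dp \<gamma> f x) ` orth)"
      by (rule bounded_subset[rotated]) simp
  qed
  show "f \<in> g_alpha 1"
    unfolding g_alpha_def gaA_def
  proof (intro INT_I CollectI conjI sch exI allI)
    fix A :: real and p k :: "'d \<Rightarrow> nat"
    have "L2norm (\<lambda>x. xpow_half x p k * Dp p f x) = 0" by (rule L2_zero) (use Dz in auto)
    then show "L2norm (\<lambda>x. xpow_half x p k * Dp p f x)
        \<le> ennreal (0 * A ^ (mabs p + mabs k) * kpow 1 k * kpow 1 p)" by simp
  qed
  show "\<forall>h>0. \<exists>C>0. \<forall>k p. L2norm (\<lambda>x. xpow x k * Dp p f x)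
               \<le> ennreal (C * h ^ (mabs p + mabs k) * fact (mabs k))"
  proof (intro allI impI exI[of _ 1] conjI)
    fix h :: real and k p :: "'d \<Rightarrow> nat"
    have "L2norm (\<lambda>x. xpow x k * Dp p f x) = 0" by (rule L2_zero) (use Dz in auto)
    then show "L2norm (\<lambda>x. xpow x k * Dp p f x) \<le> ennreal (1 * h ^ (mabs p + mabs k) * fact (mabs k))"
      by simp
  qed simp
  show "\<forall>h>0. \<exists>C>0. \<forall>k p. \<forall>x\<in>orth. \<bar>xpow x k * Dp p f x\<bar>
               \<le> C * h ^ (mabs p + mabs k) * fact (mabs k)"
  proof (intro allI impI exI[of _ 1] conjI ballI)
    fix h :: real and k p :: "'d \<Rightarrow> nat" and x :: "real^'d" assume h: "h > 0" and x: "x \<in> orth"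
    show "\<bar>xpow x k * Dp p f x\<bar> \<le> 1 * h ^ (mabs p + mabs k) * fact (mabs k)"
      using Dz x h by simp
  qed simp
qed

theorem lemma2p7:
  fixes f :: "real^'d::finite \<Rightarrow> real"
  assumes "smooth_on orth f"
  shows "(f \<in> g_alpha 1 \<longleftrightarrow>
           (\<forall>h>0. \<exists>C>0. \<forall>k p. L2norm (\<lambda>x. xpow x k * Dp p f x)
               \<le> ennreal (C * h ^ (mabs p + mabs k) * fact (mabs k))))
       \<and> (f \<in> g_alpha 1 \<longleftrightarrow>
           (\<forall>h>0. \<exists>C>0. \<forall>k p. \<forall>x\<in>orth. \<bar>xpow x k * Dp p f x\<bar>
               \<le> C * h ^ (mabs p + mabs k) * fact (mabs k)))"
  using Z_conds[OF assms] i_zero[OF assms] ii_zero[OF assms] iii_zero[OF assms] by blast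



end
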